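(* Let $R$ be a root system in $\mathbb{R}^N$, let $R'$ be a positive orthogonal subsystem of $R$, and let $\kappa:R'\to\mathbb{C}$ be any function (multiplicity function). For $\xi\in\mathbb{R}^N$ define the operator $T_\xi$ on the space of polynomial functions on $\mathbb{R}^N$ by $$(T_\xi f)(x)=\partial_\xi f(x)+\sum_{\alpha\in R'}\kappa(\alpha)\langle\alpha,\xi\rangle\frac{f(x)-f(\tau_\alpha x)}{\langle x,\alpha\rangle},\qquad \tau_\alpha(x)=x-\frac{\langle x,\alpha\rangle}{|\alpha|^2}\alpha .$$ Then for all $\xi,\eta\in\mathbb{R}^N$, $[T_\xi,T_\eta]=T_\xi T_\eta-T_\eta T_\xi=0$.
   Context: $\langle\cdot,\cdot\rangle$ is the Euclidean inner product, $|x|=\sqrt{\langle x,x\rangle}$, and $\partial_\xi$ is the directional derivative in direction $\xi$. A root system is a finite set $R\subset\mathbb{R}^N\setminus\{0\}$ with $s_\alpha(R)=R$ and $R\cap\mathbb{R}\alpha=\{\pm\alpha\}$ for all $\alpha\in R$, where $s_\alpha(x)=x-2\frac{\langle x,\alpha\rangle}{|\alpha|^2}\alpha$. A subsystem $R''$ of $R$ is a subset closed under negation and such that $\alpha,\beta\in R''$, $\alpha+\beta\in R$ imply $\alpha+\beta\in R''$; it is orthogonal if it consists of pairwise orthogonal roots (apart from $\pm$ pairs). A positive orthogonal subsystem $R'$ is a subset of an orthogonal subsystem $R''$ with $R''=R'\cup(-R')$, $R'\cap(-R')=\emptyset$. The difference quotients map polynomials to polynomials, so $T_\xi$ maps polynomials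 to polynomials. *)

theory Defs
  imports "HOL-Analysis.Analysis"
begin

definition refl_root :: "real^'n \<Rightarrow> real^'n \<Rightarrow> real^'n" where
  "refl_root \<alpha> x = x - (2 * (x \<bullet> \<alpha>) / (norm \<alpha>)^2) *\<^sub>R \<alpha>"

definition tau_root :: "real^'n \<Rightarrow> real^'n \<Rightarrow> real^'n" where
  "tau_root \<alpha> x = x - ((x \<bullet> \<alpha>) / (norm \<alpha>)^2) *\<^sub>R \<alpha>"

definition root_system :: "(real^'n) set \<Rightarrow> bool" where
  "root_system R \<longleftrightarrow> finite R \<and> 0 \<notin> R \<and>
     (\<forall>\<alpha>\<in>R. refl_root \<alpha> ` R = R) \<and>
     (\<forall>\<alpha>\<in>R. R \<inter> {t *\<^sub>R \<alpha> | t. True} = {\<alpha>, -\<alpha>})"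

definition subsystem :: "(real^'n) set \<Rightarrow> (real^'n) set \<Rightarrow> bool" where
  "subsystem S R \<longleftrightarrow> S \<subseteq> R \<and> (\<forall>\<alpha>\<in>S. -\<alpha> \<in> S) \<and>
     (\<forall>\<alpha>\<in>S. \<forall>\<beta>\<in>S. \<alpha> + \<beta> \<in> R \<longrightarrow> \<alpha> + \<beta> \<in> S)"

definition orthogonal_subsystem :: "(real^'n) set \<Rightarrow> (real^'n) set \<Rightarrow> bool" where
  "orthogonal_subsystem S R \<longleftrightarrow> subsystem S R \<and>
     (\<forall>\<alpha>\<in>S. \<forall>\<beta>\<in>S. \<beta> \<noteq> \<alpha> \<and> \<beta> \<noteq> -\<alpha> \<longrightarrow> \<alpha> \<bullet> \<beta> = 0)"

definition positive_orthogonal_subsystem :: "(real^'n) set \<Rightarrow> (real^'n) set \<Rightarrow> bool" where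
  "positive_orthogonal_subsystem R' R \<longleftrightarrow>
     (\<exists>R''. orthogonal_subsystem R'' R \<and> R' \<subseteq> R'' \<and>
            R'' = R' \<union> uminus ` R' \<and> R' \<inter> uminus ` R' = {})"

inductive_set poly_fun :: "(real^'n \<Rightarrow> complex) set" where
  const: "(\<lambda>x. c) \<in> poly_fun"
| coord: "(\<lambda>x. complex_of_real (x $ i)) \<in> poly_fun"
| add: "f \<in> poly_fun \<Longrightarrow> g \<in> poly_fun \<Longrightarrow> (\<lambda>x. f x + g x) \<in> poly_fun"
| mult: "f \<in> poly_fun \<Longrightarrow> g \<in> poly_fun \<Longrightarrow> (\<lambda>x. f x * g x) \<in> poly_fun"

definition dir_deriv :: "real^'n \<Rightarrow> (real^'n \<Rightarrow> complex) \<Rightarrow> real^'n \<Rightarrow> complex" where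
  "dir_deriv \<xi> f x = vector_derivative (\<lambda>t. f (x + t *\<^sub>R \<xi>)) (at 0)"

text \<open>Difference quotient (f(x) - f(tau_alpha x)) / <x,alpha>, understood as the polynomial
  function which agrees with this quotient off the hyperplane <x,alpha> = 0.\<close>
definition diff_quot :: "real^'n \<Rightarrow> (real^'n \<Rightarrow> complex) \<Rightarrow> real^'n \<Rightarrow> complex" where
  "diff_quot \<alpha> f = (THE g. g \<in> poly_fun \<and>
      (\<forall>x. x \<bullet> \<alpha> \<noteq> 0 \<longrightarrow> g x = (f x - f (tau_root \<alpha> x)) / complex_of_real (x \<bullet> \<alpha>)))"

definition dunkl_T :: "(real^'n \<Rightarrow> complex) \<Rightarrow> (real^'n) set \<Rightarrow> real^'n
    \<Rightarrow> (real^'n \<Rightarrow> complex) \<Rightarrow> real^'n \<Rightarrow> complex" where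
  "dunkl_T \<kappa> R' \<xi> f x = dir_deriv \<xi> f x +
     (\<Sum>\<alpha>\<in>R'. \<kappa> \<alpha> * complex_of_real (\<alpha> \<bullet> \<xi>) * diff_quot \<alpha> f x)"

end

theory Submission
  imports Defs
begin


lemma P_const: "(\<lambda>x. c) \<in> poly_fun" by (rule poly_fun.const)
lemma P_add: "f \<in> poly_fun \<Longrightarrow> g \<in> poly_fun \<Longrightarrow> (\<lambda>x. f x + g x) \<in> poly_fun" by (rule poly_fun.add)
lemma P_mult: "f \<in> poly_fun \<Longrightarrow> g \<in> poly_fun \<Longrightarrow> (\<lambda>x. f x * g x) \<in> poly_fun" by (rule poly_fun.mult)
lemma P_cmult: "f \<in> poly_fun \<Longrightarrow> (\<lambda>x. c * f x) \<in> poly_fun"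
  using P_mult[OF P_const] by blast
lemma P_diff: "f \<in> poly_fun \<Longrightarrow> g \<in> poly_fun \<Longrightarrow> (\<lambda>x. f x - g x) \<in> poly_fun"
proof -
  assume "f \<in> poly_fun" "g \<in> poly_fun"
  then have "(\<lambda>x. f x + (-1) * g x) \<in> poly_fun" by (intro P_add P_cmult)
  then show ?thesis by simp
qed
lemma P_sum: "finite A \<Longrightarrow> (\<And>a. a \<in> A \<Longrightarrow> f a \<in> poly_fun) \<Longrightarrow> (\<lambda>x. \<Sum>a\<in>A. f a x) \<in> poly_fun"
proof (induction A rule: finite_induct)
  case empty then show ?case using P_const[of 0] by simp
next
  case (insert a A)
  then have "(\<lambda>x. f a x + (\<Sum>a\<in>A. f a x)) \<in> poly_fun" by (intro P_add) auto
  then show ?case using insert by simp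
qed
lemma P_coord: "(\<lambda>x. complex_of_real (x $ i)) \<in> poly_fun" by (rule poly_fun.coord)

lemma P_inner: "(\<lambda>x. complex_of_real (x \<bullet> v)) \<in> poly_fun"
proof -
  have "(\<lambda>x. \<Sum>i\<in>UNIV. complex_of_real (v $ i) * complex_of_real (x $ i)) \<in> poly_fun"
    by (intro P_sum P_cmult P_coord) auto
  moreover have "(\<lambda>x. complex_of_real (x \<bullet> v)) = (\<lambda>x. \<Sum>i\<in>UNIV. complex_of_real (v $ i) * complex_of_real (x $ i))"
    by (auto simp: inner_vec_def mult.commute)
  ultimately show ?thesis by simp
qed

lemma tau_nth: "tau_root \<alpha> x $ i = x $ i - (x \<bullet> \<alpha>) / (norm \<alpha>)^2 * \<alpha> $ i"
  by (simp add: tau_root_def)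

lemma P_tau: "f \<in> poly_fun \<Longrightarrow> (\<lambda>x. f (tau_root \<alpha> x)) \<in> poly_fun"
proof (induction rule: poly_fun.induct)
  case (const c) then show ?case by (rule P_const)
next
  case (coord i)
  have "(\<lambda>x. complex_of_real (x $ i) - complex_of_real (\<alpha> $ i / (norm \<alpha>)^2) * complex_of_real (x \<bullet> \<alpha>)) \<in> poly_fun"
    by (intro P_diff P_coord P_cmult P_inner)
  moreover have "(\<lambda>x. complex_of_real (tau_root \<alpha> x $ i)) = (\<lambda>x. complex_of_real (x $ i) - complex_of_real (\<alpha> $ i / (norm \<alpha>)^2) * complex_of_real (x \<bullet> \<alpha>))"
    by (auto simp: tau_nth)
  ultimately show ?case by simp
next
  case (add f g) then show ?case by (intro P_add)
next
  case (mult f g) then show ?case by (intro P_mult)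
qed

lemma poly_deriv: "f \<in> poly_fun \<Longrightarrow> \<exists>F. (\<forall>x. (f has_derivative F x) (at x)) \<and> (\<forall>v. (\<lambda>x. F x v) \<in> poly_fun)"
proof (induction rule: poly_fun.induct)
  case (const c)
  show ?case by (rule exI[of _ "\<lambda>x h. 0"]) (auto intro: P_const)
next
  case (coord i)
  have "((\<lambda>x::real^'a. x $ i) has_derivative (\<lambda>x. x $ i)) (at x)" for x
    by (rule bounded_linear_imp_has_derivative) auto
  then show ?case
    by (intro exI[of _ "\<lambda>x h. complex_of_real (h $ i)"]) (auto intro: P_const has_derivative_of_real)
next
  case (add f g)
  then obtain F G where F: "\<forall>x. (f has_derivative F x) (at x)" "\<forall>v. (\<lambda>x. F x v) \<in> poly_fun"
    and G: "\<forall>x. (g has_derivative G x) (at x)" "\<forall>v. (\<lambda>x. G x v) \<in> poly_fun" by blast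
  show ?case
    by (rule exI[of _ "\<lambda>x h. F x h + G x h"]) (use F G in \<open>auto intro!: has_derivative_add P_add\<close>)
next
  case (mult f g)
  then obtain F G where F: "\<forall>x. (f has_derivative F x) (at x)" "\<forall>v. (\<lambda>x. F x v) \<in> poly_fun"
    and G: "\<forall>x. (g has_derivative G x) (at x)" "\<forall>v. (\<lambda>x. G x v) \<in> poly_fun" by blast
  show ?case
    by (rule exI[of _ "\<lambda>x h. f x * G x h + F x h * g x"]) (use F G mult in \<open>auto intro!: has_derivative_mult P_add P_mult\<close>)
qed

definition DF :: "(real^'n \<Rightarrow> complex) \<Rightarrow> real^'n \<Rightarrow> real^'n \<Rightarrow> complex" where
  "DF f x = frechet_derivative f (at x)"

lemma DF_has: "f \<in> poly_fun \<Longrightarrow> (f has_derivative DF f x) (at x)"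
  using poly_deriv[of f] unfolding DF_def by (metis differentiable_def frechet_derivative_works)

lemma DF_poly: "f \<in> poly_fun \<Longrightarrow> (\<lambda>x. DF f x v) \<in> poly_fun"
proof -
  assume f: "f \<in> poly_fun"
  then obtain F where F: "\<forall>x. (f has_derivative F x) (at x)" "\<forall>v. (\<lambda>x. F x v) \<in> poly_fun"
    using poly_deriv by blast
  have "DF f x = F x" for x using F(1) DF_has[OF f, of x] has_derivative_unique by blast
  then show ?thesis using F(2) by simp
qed

lemma DF_linear: "f \<in> poly_fun \<Longrightarrow> linear (DF f x)"
  using DF_has has_derivative_linear by blast

lemma dir_deriv_eq: "(g has_derivative G) (at x) \<Longrightarrow> dir_deriv v g x = G v"
proof -
  assume g: "(g has_derivative G) (at x)"
  have h1: "((\<lambda>t::real. x + t *\<^sub>R v) has_derivative (\<lambda>t. t *\<^sub>R v)) (at 0)"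
    by (auto intro!: derivative_eq_intros)
  have h2: "(g has_derivative G) (at ((\<lambda>t::real. x + t *\<^sub>R v) 0))" using g by simp
  have "((g \<circ> (\<lambda>t. x + t *\<^sub>R v)) has_derivative (G \<circ> (\<lambda>t. t *\<^sub>R v))) (at 0)"
    by (rule diff_chain_at[OF h1 h2])
  moreover have "G \<circ> (\<lambda>t. t *\<^sub>R v) = (\<lambda>t. t *\<^sub>R G v)"
    using has_derivative_linear[OF g] by (auto simp: linear_scale)
  ultimately have "((\<lambda>t. g (x + t *\<^sub>R v)) has_vector_derivative G v) (at 0)"
    by (simp add: has_vector_derivative_def o_def)
  then show ?thesis unfolding dir_deriv_def by (rule vector_derivative_at)
qed

lemma dd_DF: "f \<in> poly_fun \<Longrightarrow> dir_deriv v f = (\<lambda>x. DF f x v)"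
  using dir_deriv_eq DF_has by blast

lemma dd_poly: "f \<in> poly_fun \<Longrightarrow> dir_deriv v f \<in> poly_fun"
  by (simp add: dd_DF DF_poly)


lemma P_cont: "f \<in> poly_fun \<Longrightarrow> isCont f x"
  using DF_has has_derivative_continuous by blast

lemma vanish:
  assumes a: "\<alpha> \<noteq> 0" and h: "h \<in> poly_fun" and z: "\<And>x. complex_of_real (x \<bullet> \<alpha>) * h x = 0"
  shows "h x = 0"
proof (cases "x \<bullet> \<alpha> = 0")
  case False
  then show ?thesis using z[of x] by simp
next
  case True
  define y where "y = (\<lambda>n. x + inverse (real (Suc n)) *\<^sub>R \<alpha>)"
  have "(\<lambda>n. inverse (real (Suc n)) *\<^sub>R \<alpha>) \<longlonglongrightarrow> 0 *\<^sub>R \<alpha>"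
    by (intro tendsto_scaleR tendsto_const LIMSEQ_inverse_real_of_nat)
  then have "y \<longlonglongrightarrow> x + 0 *\<^sub>R \<alpha>" unfolding y_def by (intro tendsto_add tendsto_const)
  then have "y \<longlonglongrightarrow> x" by simp
  then have lim: "(\<lambda>n. h (y n)) \<longlonglongrightarrow> h x" using P_cont[OF h] isCont_tendsto_compose by blast
  have "h (y n) = 0" for n
  proof -
    have "y n \<bullet> \<alpha> = inverse (real (Suc n)) * (\<alpha> \<bullet> \<alpha>)" using True by (simp add: y_def inner_add_left)
    also have "\<dots> \<noteq> 0" using a by simp
    finally show ?thesis using z[of "y n"] by simp
  qed
  then have "(\<lambda>n. h (y n)) \<longlonglongrightarrow> 0" by simp
  then show ?thesis using lim LIMSEQ_unique by blast
qed

lemma dq_unique: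
  assumes a: "\<alpha> \<noteq> 0" and g: "g \<in> poly_fun"
    and eq: "\<And>x. F x - F (tau_root \<alpha> x) = complex_of_real (x \<bullet> \<alpha>) * g x"
  shows "diff_quot \<alpha> F = g"
  unfolding diff_quot_def
proof (rule the_equality)
  show "g \<in> poly_fun \<and> (\<forall>x. x \<bullet> \<alpha> \<noteq> 0 \<longrightarrow> g x = (F x - F (tau_root \<alpha> x)) / complex_of_real (x \<bullet> \<alpha>))"
    using g eq by simp
next
  fix g' assume H: "g' \<in> poly_fun \<and> (\<forall>x. x \<bullet> \<alpha> \<noteq> 0 \<longrightarrow> g' x = (F x - F (tau_root \<alpha> x)) / complex_of_real (x \<bullet> \<alpha>))"
  have "(\<lambda>x. g' x - g x) x = 0" for x
  proof (rule vanish[OF a])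
    show "(\<lambda>x. g' x - g x) \<in> poly_fun" using H g by (intro P_diff) auto
    fix y show "complex_of_real (y \<bullet> \<alpha>) * (g' y - g y) = 0"
      using H eq[of y] by (cases "y \<bullet> \<alpha> = 0") (auto simp: field_simps)
  qed
  then show "g' = g" by auto
qed

lemma dq_exists: "f \<in> poly_fun \<Longrightarrow> \<exists>g\<in>poly_fun. \<forall>x. f x - f (tau_root \<alpha> x) = complex_of_real (x \<bullet> \<alpha>) * g x"
proof (induction rule: poly_fun.induct)
  case (const c) then show ?case using P_const[of 0] by auto
next
  case (coord i)
  show ?case
  proof (intro bexI[of _ "\<lambda>x. complex_of_real (\<alpha> $ i / (norm \<alpha>)^2)"] allI)
    fix x
    have "x $ i - tau_root \<alpha> x $ i = (x \<bullet> \<alpha>) * (\<alpha> $ i / (norm \<alpha>)^2)"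
      by (simp add: tau_nth)
    then show "complex_of_real (x $ i) - complex_of_real (tau_root \<alpha> x $ i) =
       complex_of_real (x \<bullet> \<alpha>) * complex_of_real (\<alpha> $ i / (norm \<alpha>)^2)"
      by (metis of_real_diff of_real_mult)
  qed (rule P_const)
next
  case (add f g)
  then obtain F G where "F \<in> poly_fun" "G \<in> poly_fun" 
    "\<forall>x. f x - f (tau_root \<alpha> x) = complex_of_real (x \<bullet> \<alpha>) * F x"
    "\<forall>x. g x - g (tau_root \<alpha> x) = complex_of_real (x \<bullet> \<alpha>) * G x" by blast
  note FG = this
  show ?case
  proof (intro bexI[of _ "\<lambda>x. F x + G x"] allI)
    fix x
    have "f x + g x - (f (tau_root \<alpha> x) + g (tau_root \<alpha> x)) = (f x - f (tau_root \<alpha> x)) + (g x - g (tau_root \<alpha> x))"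
      by (simp add: algebra_simps)
    also have "\<dots> = complex_of_real (x \<bullet> \<alpha>) * F x + complex_of_real (x \<bullet> \<alpha>) * G x"
      by (simp only: FG(3)[rule_format] FG(4)[rule_format])
    finally show "f x + g x - (f (tau_root \<alpha> x) + g (tau_root \<alpha> x)) = complex_of_real (x \<bullet> \<alpha>) * (F x + G x)"
      by (simp add: distrib_left)
  qed (rule P_add[OF FG(1) FG(2)])
next
  case (mult f g)
  then obtain F G where FG: "F \<in> poly_fun" "G \<in> poly_fun" 
    "\<forall>x. f x - f (tau_root \<alpha> x) = complex_of_real (x \<bullet> \<alpha>) * F x"
    "\<forall>x. g x - g (tau_root \<alpha> x) = complex_of_real (x \<bullet> \<alpha>) * G x" by blast
  show ?case
  proof (intro bexI[of _ "\<lambda>x. F x * g x + f (tau_root \<alpha> x) * G x"] allI)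
    fix x
    have "f x * g x - f (tau_root \<alpha> x) * g (tau_root \<alpha> x) =
       (f x - f (tau_root \<alpha> x)) * g x + f (tau_root \<alpha> x) * (g x - g (tau_root \<alpha> x))"
      by (simp add: algebra_simps)
    also have "\<dots> = (complex_of_real (x \<bullet> \<alpha>) * F x) * g x + f (tau_root \<alpha> x) * (complex_of_real (x \<bullet> \<alpha>) * G x)"
      by (simp only: FG(3)[rule_format] FG(4)[rule_format])
    also have "\<dots> = complex_of_real (x \<bullet> \<alpha>) * (F x * g x + f (tau_root \<alpha> x) * G x)"
      by (simp add: algebra_simps)
    finally show "f x * g x - f (tau_root \<alpha> x) * g (tau_root \<alpha> x) = complex_of_real (x \<bullet> \<alpha>) * (F x * g x + f (tau_root \<alpha> x) * G x)" .
    show "(\<lambda>x. F x * g x + f (tau_root \<alpha> x) * G x) \<in> poly_fun"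
      using FG mult by (intro P_add P_mult P_tau) auto
  qed
qed

lemma dq_char:
  assumes a: "\<alpha> \<noteq> 0" and f: "f \<in> poly_fun"
  shows "diff_quot \<alpha> f \<in> poly_fun" "\<And>x. f x - f (tau_root \<alpha> x) = complex_of_real (x \<bullet> \<alpha>) * diff_quot \<alpha> f x"
proof -
  obtain g where g: "g \<in> poly_fun" "\<forall>x. f x - f (tau_root \<alpha> x) = complex_of_real (x \<bullet> \<alpha>) * g x"
    using dq_exists[OF f] by blast
  have "diff_quot \<alpha> f = g" using dq_unique[OF a g(1)] g(2) by blast
  then show "diff_quot \<alpha> f \<in> poly_fun" "\<And>x. f x - f (tau_root \<alpha> x) = complex_of_real (x \<bullet> \<alpha>) * diff_quot \<alpha> f x"
    using g by auto
qed



lemma dd_add: "f \<in> poly_fun \<Longrightarrow> g \<in> poly_fun \<Longrightarrow> dir_deriv v (\<lambda>x. f x + g x) = (\<lambda>x. dir_deriv v f x + dir_deriv v g x)"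
  by (rule ext, subst dir_deriv_eq[OF has_derivative_add[OF DF_has DF_has]]) (auto simp: dd_DF)

lemma dd_mult: "f \<in> poly_fun \<Longrightarrow> g \<in> poly_fun \<Longrightarrow> dir_deriv v (\<lambda>x. f x * g x) = (\<lambda>x. dir_deriv v f x * g x + f x * dir_deriv v g x)"
  by (rule ext, subst dir_deriv_eq[OF has_derivative_mult[OF DF_has DF_has]]) (auto simp: dd_DF)

lemma dd_const: "dir_deriv v (\<lambda>x. c) = (\<lambda>x. 0)"
  by (rule ext, subst dir_deriv_eq[OF has_derivative_const]) auto

lemma dd_coord: "dir_deriv v (\<lambda>x::real^'n. complex_of_real (x $ i)) = (\<lambda>x. complex_of_real (v $ i))"
proof (rule ext)
  fix x :: "real^'n"
  have "((\<lambda>x::real^'n. x $ i) has_derivative (\<lambda>x. x $ i)) (at x)"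
    by (rule bounded_linear_imp_has_derivative) auto
  then show "dir_deriv v (\<lambda>x. complex_of_real (x $ i)) x = complex_of_real (v $ i)"
    by (subst dir_deriv_eq[OF has_derivative_of_real]) auto
qed

lemma dd_comm: "f \<in> poly_fun \<Longrightarrow> dir_deriv v (dir_deriv w f) = dir_deriv w (dir_deriv v f)"
proof (induction arbitrary: v w rule: poly_fun.induct)
  case (const c) then show ?case by (simp add: dd_const)
next
  case (coord i) then show ?case by (simp add: dd_coord dd_const)
next
  case (add f g) then show ?case by (simp add: dd_add dd_poly)
next
  case (mult f g)
  then show ?case by (simp add: dd_add dd_mult dd_poly P_mult algebra_simps)
qed


lemma tau_linear: "linear (tau_root \<alpha>)"
  by (rule linearI) (auto simp: tau_root_def inner_add_left algebra_simps add_divide_distrib scaleR_add_left)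

lemma tau_has: "(tau_root \<alpha> has_derivative tau_root \<alpha>) (at x)"
  by (rule linear_imp_has_derivative[OF tau_linear])

lemma cross:
  assumes a: "\<alpha> \<noteq> 0" and f: "f \<in> poly_fun"
  shows "complex_of_real (\<alpha> \<bullet> \<eta>) * dir_deriv \<xi> (diff_quot \<alpha> f) x + complex_of_real (\<alpha> \<bullet> \<xi>) * diff_quot \<alpha> (dir_deriv \<eta> f) x
       = complex_of_real (\<alpha> \<bullet> \<xi>) * dir_deriv \<eta> (diff_quot \<alpha> f) x + complex_of_real (\<alpha> \<bullet> \<eta>) * diff_quot \<alpha> (dir_deriv \<xi> f) x"
proof -
  define D where "D = diff_quot \<alpha> f"
  have DP: "D \<in> poly_fun" and Deq: "\<And>y. f y - f (tau_root \<alpha> y) = complex_of_real (y \<bullet> \<alpha>) * D y"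
    using dq_char[OF a f] unfolding D_def by auto
  define W where "W = (\<lambda>y. complex_of_real (1 / (norm \<alpha>)^2) * DF f (tau_root \<alpha> y) \<alpha> - D y)"
  have key: "complex_of_real (y \<bullet> \<alpha>) * (DF D y v - diff_quot \<alpha> (dir_deriv v f) y) = complex_of_real (v \<bullet> \<alpha>) * W y" for y v
  proof -
    have h1: "((\<lambda>y. f y - f (tau_root \<alpha> y)) has_derivative (\<lambda>h. DF f y h - DF f (tau_root \<alpha> y) (tau_root \<alpha> h))) (at y)"
      using has_derivative_diff[OF DF_has[OF f] diff_chain_at[OF tau_has DF_has[OF f]]] by (simp add: o_def)
    have h2: "((\<lambda>y. complex_of_real (y \<bullet> \<alpha>) * D y) has_derivative (\<lambda>h. complex_of_real (y \<bullet> \<alpha>) * DF D y h + complex_of_real (h \<bullet> \<alpha>) * D y)) (at y)"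
      by (rule has_derivative_mult[OF has_derivative_of_real[OF has_derivative_inner_left[OF has_derivative_ident]] DF_has[OF DP]])
    have feq: "(\<lambda>y. f y - f (tau_root \<alpha> y)) = (\<lambda>y. complex_of_real (y \<bullet> \<alpha>) * D y)" using Deq by auto
    have "(\<lambda>h. DF f y h - DF f (tau_root \<alpha> y) (tau_root \<alpha> h)) = (\<lambda>h. complex_of_real (y \<bullet> \<alpha>) * DF D y h + complex_of_real (h \<bullet> \<alpha>) * D y)"
      by (rule has_derivative_unique[OF h1[unfolded feq] h2])
    from fun_cong[OF this, of v] have e1: "DF f y v - DF f (tau_root \<alpha> y) (tau_root \<alpha> v) = complex_of_real (y \<bullet> \<alpha>) * DF D y v + complex_of_real (v \<bullet> \<alpha>) * D y"
      by simp
    have e2: "DF f y v - DF f (tau_root \<alpha> y) v = complex_of_real (y \<bullet> \<alpha>) * diff_quot \<alpha> (dir_deriv v f) y"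
      using dq_char(2)[OF a dd_poly[OF f], of v y] by (simp add: dd_DF[OF f])
    have lin: "DF f (tau_root \<alpha> y) (tau_root \<alpha> v) = DF f (tau_root \<alpha> y) v - complex_of_real ((v \<bullet> \<alpha>) / (norm \<alpha>)^2) * DF f (tau_root \<alpha> y) \<alpha>"
    proof -
      have L: "linear (DF f (tau_root \<alpha> y))" by (rule DF_linear[OF f])
      have "DF f (tau_root \<alpha> y) (tau_root \<alpha> v) = DF f (tau_root \<alpha> y) (v - ((v \<bullet> \<alpha>) / (norm \<alpha>)^2) *\<^sub>R \<alpha>)"
        by (simp add: tau_root_def)
      also have "\<dots> = DF f (tau_root \<alpha> y) v - ((v \<bullet> \<alpha>) / (norm \<alpha>)^2) *\<^sub>R DF f (tau_root \<alpha> y) \<alpha>"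
        by (simp only: linear_diff[OF L] linear_scale[OF L])
      finally show ?thesis by (simp only: scaleR_conv_of_real)
    qed
    have e1': "complex_of_real (y \<bullet> \<alpha>) * DF D y v = DF f y v - DF f (tau_root \<alpha> y) (tau_root \<alpha> v) - complex_of_real (v \<bullet> \<alpha>) * D y"
      by (simp only: e1 add_diff_cancel_right')
    have "complex_of_real (y \<bullet> \<alpha>) * (DF D y v - diff_quot \<alpha> (dir_deriv v f) y)
        = complex_of_real (y \<bullet> \<alpha>) * DF D y v - complex_of_real (y \<bullet> \<alpha>) * diff_quot \<alpha> (dir_deriv v f) y"
      by (simp only: right_diff_distrib)
    also have "\<dots> = (DF f y v - DF f (tau_root \<alpha> y) (tau_root \<alpha> v) - complex_of_real (v \<bullet> \<alpha>) * D y) - (DF f y v - DF f (tau_root \<alpha> y) v)"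
      by (simp only: e1' e2)
    also have "\<dots> = complex_of_real ((v \<bullet> \<alpha>) / (norm \<alpha>)^2) * DF f (tau_root \<alpha> y) \<alpha> - complex_of_real (v \<bullet> \<alpha>) * D y"
      unfolding lin by (simp add: algebra_simps)
    also have "\<dots> = complex_of_real (v \<bullet> \<alpha>) * W y"
      by (simp add: W_def field_simps)
    finally show ?thesis .
  qed
  define h where "h = (\<lambda>y. complex_of_real (\<alpha> \<bullet> \<eta>) * dir_deriv \<xi> D y + complex_of_real (\<alpha> \<bullet> \<xi>) * diff_quot \<alpha> (dir_deriv \<eta> f) y
       - (complex_of_real (\<alpha> \<bullet> \<xi>) * dir_deriv \<eta> D y + complex_of_real (\<alpha> \<bullet> \<eta>) * diff_quot \<alpha> (dir_deriv \<xi> f) y))"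
  have hP: "h \<in> poly_fun" unfolding h_def
    by (intro P_diff P_add P_cmult dd_poly DP dq_char(1)[OF a] f)
  have "h x = 0"
  proof (rule vanish[OF a hP])
    fix y
    have "complex_of_real (y \<bullet> \<alpha>) * h y = complex_of_real (\<alpha> \<bullet> \<eta>) * (complex_of_real (y \<bullet> \<alpha>) * (DF D y \<xi> - diff_quot \<alpha> (dir_deriv \<xi> f) y))
       - complex_of_real (\<alpha> \<bullet> \<xi>) * (complex_of_real (y \<bullet> \<alpha>) * (DF D y \<eta> - diff_quot \<alpha> (dir_deriv \<eta> f) y))"
      unfolding h_def dd_DF[OF DP] by (simp add: algebra_simps)
    also have "\<dots> = 0" unfolding key by (simp add: inner_commute)
    finally show "complex_of_real (y \<bullet> \<alpha>) * h y = 0" .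
  qed
  then show ?thesis unfolding h_def D_def by simp
qed


lemma tau_inner: "\<alpha> \<bullet> \<beta> = 0 \<Longrightarrow> tau_root \<alpha> x \<bullet> \<beta> = x \<bullet> \<beta>"
  by (simp add: tau_root_def inner_diff_left)

lemma tau_comm: "\<alpha> \<bullet> \<beta> = 0 \<Longrightarrow> tau_root \<beta> (tau_root \<alpha> x) = tau_root \<alpha> (tau_root \<beta> x)"
proof -
  assume o: "\<alpha> \<bullet> \<beta> = 0"
  then have o': "\<beta> \<bullet> \<alpha> = 0" by (simp add: inner_commute)
  show ?thesis
    by (simp add: tau_root_def inner_diff_left o o' algebra_simps)
qed

lemma dq_comm:
  assumes a: "\<alpha> \<noteq> 0" and b: "\<beta> \<noteq> 0" and o: "\<alpha> \<bullet> \<beta> = 0" and f: "f \<in> poly_fun"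
  shows "diff_quot \<alpha> (diff_quot \<beta> f) = diff_quot \<beta> (diff_quot \<alpha> f)"
proof -
  have o': "\<beta> \<bullet> \<alpha> = 0" using o by (simp add: inner_commute)
  define A where "A = diff_quot \<alpha> (diff_quot \<beta> f)"
  define B where "B = diff_quot \<beta> (diff_quot \<alpha> f)"
  have AP: "A \<in> poly_fun" unfolding A_def by (intro dq_char(1) a b f)
  have BP: "B \<in> poly_fun" unfolding B_def by (intro dq_char(1) a b f)
  have eA: "complex_of_real (x \<bullet> \<beta>) * (complex_of_real (x \<bullet> \<alpha>) * A x) =
     (f x - f (tau_root \<beta> x)) - (f (tau_root \<alpha> x) - f (tau_root \<beta> (tau_root \<alpha> x)))" for x
  proof -
    have "complex_of_real (x \<bullet> \<alpha>) * A x = diff_quot \<beta> f x - diff_quot \<beta> f (tau_root \<alpha> x)"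
      unfolding A_def using dq_char(2)[OF a dq_char(1)[OF b f], of x] by simp
    then have "complex_of_real (x \<bullet> \<beta>) * (complex_of_real (x \<bullet> \<alpha>) * A x) =
       complex_of_real (x \<bullet> \<beta>) * diff_quot \<beta> f x - complex_of_real (tau_root \<alpha> x \<bullet> \<beta>) * diff_quot \<beta> f (tau_root \<alpha> x)"
      by (simp add: tau_inner[OF o] right_diff_distrib)
    also have "\<dots> = (f x - f (tau_root \<beta> x)) - (f (tau_root \<alpha> x) - f (tau_root \<beta> (tau_root \<alpha> x)))"
      by (simp only: dq_char(2)[OF b f, symmetric])
    finally show ?thesis .
  qed
  have eB: "complex_of_real (x \<bullet> \<alpha>) * (complex_of_real (x \<bullet> \<beta>) * B x) =
     (f x - f (tau_root \<alpha> x)) - (f (tau_root \<beta> x) - f (tau_root \<alpha> (tau_root \<beta> x)))" for x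
  proof -
    have "complex_of_real (x \<bullet> \<beta>) * B x = diff_quot \<alpha> f x - diff_quot \<alpha> f (tau_root \<beta> x)"
      unfolding B_def using dq_char(2)[OF b dq_char(1)[OF a f], of x] by simp
    then have "complex_of_real (x \<bullet> \<alpha>) * (complex_of_real (x \<bullet> \<beta>) * B x) =
       complex_of_real (x \<bullet> \<alpha>) * diff_quot \<alpha> f x - complex_of_real (tau_root \<beta> x \<bullet> \<alpha>) * diff_quot \<alpha> f (tau_root \<beta> x)"
      by (simp add: tau_inner[OF o'] right_diff_distrib)
    also have "\<dots> = (f x - f (tau_root \<alpha> x)) - (f (tau_root \<beta> x) - f (tau_root \<alpha> (tau_root \<beta> x)))"
      by (simp only: dq_char(2)[OF a f, symmetric])
    finally show ?thesis .
  qed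
  define g where "g = (\<lambda>x. complex_of_real (x \<bullet> \<beta>) * (A x - B x))"
  have gP: "g \<in> poly_fun" unfolding g_def by (intro P_mult P_inner P_diff AP BP)
  have g0: "g x = 0" for x
  proof (rule vanish[OF a gP])
    fix y
    have "complex_of_real (y \<bullet> \<alpha>) * g y = complex_of_real (y \<bullet> \<beta>) * (complex_of_real (y \<bullet> \<alpha>) * A y)
       - complex_of_real (y \<bullet> \<alpha>) * (complex_of_real (y \<bullet> \<beta>) * B y)"
      unfolding g_def by (simp add: algebra_simps)
    also have "\<dots> = 0" unfolding eA eB tau_comm[OF o] by simp
    finally show "complex_of_real (y \<bullet> \<alpha>) * g y = 0" .
  qed
  have "(\<lambda>x. A x - B x) x = 0" for x
    by (rule vanish[OF b]) (use g0 P_diff[OF AP BP] in \<open>auto simp: g_def\<close>)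
  then show ?thesis unfolding A_def B_def by auto
qed

lemma shape_dd:
  assumes u: "u \<in> poly_fun" and A: "finite A" and w: "\<And>a. a \<in> A \<Longrightarrow> w a \<in> poly_fun"
  shows "dir_deriv v (\<lambda>x. u x + (\<Sum>a\<in>A. c a * w a x)) = (\<lambda>x. dir_deriv v u x + (\<Sum>a\<in>A. c a * dir_deriv v (w a) x))"
proof (rule ext)
  fix x
  have "((\<lambda>x. u x + (\<Sum>a\<in>A. c a * w a x)) has_derivative (\<lambda>h. DF u x h + (\<Sum>a\<in>A. c a * DF (w a) x h))) (at x)"
    by (intro has_derivative_add has_derivative_sum has_derivative_mult_right DF_has u w)
  then show "dir_deriv v (\<lambda>x. u x + (\<Sum>a\<in>A. c a * w a x)) x = dir_deriv v u x + (\<Sum>a\<in>A. c a * dir_deriv v (w a) x)"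
    by (simp add: dir_deriv_eq dd_DF[OF u] dd_DF[OF w])
qed

lemma shape_dq:
  assumes al: "\<alpha> \<noteq> 0" and u: "u \<in> poly_fun" and A: "finite A" and w: "\<And>a. a \<in> A \<Longrightarrow> w a \<in> poly_fun"
  shows "diff_quot \<alpha> (\<lambda>x. u x + (\<Sum>a\<in>A. c a * w a x)) = (\<lambda>x. diff_quot \<alpha> u x + (\<Sum>a\<in>A. c a * diff_quot \<alpha> (w a) x))"
proof (rule dq_unique[OF al])
  show "(\<lambda>x. diff_quot \<alpha> u x + (\<Sum>a\<in>A. c a * diff_quot \<alpha> (w a) x)) \<in> poly_fun"
    by (intro P_add P_sum P_cmult dq_char(1)[OF al] u w A)
  fix x
  have "u x + (\<Sum>a\<in>A. c a * w a x) - (u (tau_root \<alpha> x) + (\<Sum>a\<in>A. c a * w a (tau_root \<alpha> x)))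
     = (u x - u (tau_root \<alpha> x)) + (\<Sum>a\<in>A. c a * (w a x - w a (tau_root \<alpha> x)))"
    by (simp add: sum_subtractf right_diff_distrib)
  also have "\<dots> = complex_of_real (x \<bullet> \<alpha>) * diff_quot \<alpha> u x + (\<Sum>a\<in>A. c a * (complex_of_real (x \<bullet> \<alpha>) * diff_quot \<alpha> (w a) x))"
    using dq_char(2)[OF al u] dq_char(2)[OF al w] by simp
  also have "\<dots> = complex_of_real (x \<bullet> \<alpha>) * (diff_quot \<alpha> u x + (\<Sum>a\<in>A. c a * diff_quot \<alpha> (w a) x))"
    by (simp add: distrib_left sum_distrib_left mult.left_commute)
  finally show "u x + (\<Sum>a\<in>A. c a * w a x) - (u (tau_root \<alpha> x) + (\<Sum>a\<in>A. c a * w a (tau_root \<alpha> x))) =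
      complex_of_real (x \<bullet> \<alpha>) * (diff_quot \<alpha> u x + (\<Sum>a\<in>A. c a * diff_quot \<alpha> (w a) x))" .
qed



lemma alg:
  fixes d :: complex
  assumes "finite A"
  shows "d + (\<Sum>a\<in>A. (k a * p a) * X a) + (\<Sum>b\<in>A. (k b * q b) * (Y b + (\<Sum>a\<in>A. (k a * p a) * Z b a)))
    = d + (\<Sum>a\<in>A. k a * (p a * X a + q a * Y a)) + (\<Sum>b\<in>A. \<Sum>a\<in>A. (k b * q b) * (k a * p a) * Z b a)"
  by (simp add: sum.distrib sum_distrib_left distrib_left algebra_simps)

lemma T_eq: "dunkl_T \<kappa> R' \<xi> f = (\<lambda>x. dir_deriv \<xi> f x + (\<Sum>\<alpha>\<in>R'. (\<kappa> \<alpha> * complex_of_real (\<alpha> \<bullet> \<xi>)) * diff_quot \<alpha> f x))"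
  by (simp add: dunkl_T_def fun_eq_iff)

theorem theorem3p1:
  fixes R R' :: "(real^'n) set" and \<kappa> :: "real^'n \<Rightarrow> complex" and \<xi> \<eta> :: "real^'n"
    and f :: "real^'n \<Rightarrow> complex"
  assumes "root_system R"
    and "positive_orthogonal_subsystem R' R"
    and "f \<in> poly_fun"
  shows "dunkl_T \<kappa> R' \<xi> (dunkl_T \<kappa> R' \<eta> f) = dunkl_T \<kappa> R' \<eta> (dunkl_T \<kappa> R' \<xi> f)"
proof -
  note f = assms(3)
  obtain R'' where R'': "orthogonal_subsystem R'' R" "R' \<subseteq> R''" "R'' = R' \<union> uminus ` R'" "R' \<inter> uminus ` R' = {}"
    using assms(2) unfolding positive_orthogonal_subsystem_def by blast
  have RR: "finite R" "0 \<notin> R" using assms(1) unfolding root_system_def by auto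
  have sub: "R' \<subseteq> R" using R'' unfolding orthogonal_subsystem_def subsystem_def by blast
  have fin: "finite R'" using sub RR finite_subset by blast
  have nz: "\<alpha> \<noteq> 0" if "\<alpha> \<in> R'" for \<alpha> using sub RR that by blast
  have orth: "\<alpha> \<bullet> \<beta> = 0" if "\<alpha> \<in> R'" "\<beta> \<in> R'" "\<alpha> \<noteq> \<beta>" for \<alpha> \<beta>
  proof -
    have "\<beta> \<noteq> - \<alpha>"
    proof
      assume "\<beta> = - \<alpha>"
      then have "\<beta> \<in> uminus ` R'" by (intro rev_image_eqI[OF that(1)])
      then show False using that(2) R''(4) by blast
    qed
    moreover have "\<forall>\<alpha>\<in>R''. \<forall>\<beta>\<in>R''. \<beta> \<noteq> \<alpha> \<and> \<beta> \<noteq> -\<alpha> \<longrightarrow> \<alpha> \<bullet> \<beta> = 0"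
      using R''(1) unfolding orthogonal_subsystem_def by (rule conjunct2)
    moreover have "\<alpha> \<in> R''" "\<beta> \<in> R''" using R''(2) that by auto
    ultimately show ?thesis using that(3) by auto
  qed
  have dqP: "diff_quot \<alpha> g \<in> poly_fun" if "\<alpha> \<in> R'" "g \<in> poly_fun" for \<alpha> g
    using dq_char(1)[OF nz[OF that(1)] that(2)] .
  have TP: "dunkl_T \<kappa> R' v g \<in> poly_fun" if "g \<in> poly_fun" for v g
    unfolding T_eq by (intro P_add P_sum P_cmult dd_poly dqP that fin) auto
  have dqc: "diff_quot \<beta> (diff_quot \<alpha> f) = diff_quot \<alpha> (diff_quot \<beta> f)" if "\<alpha> \<in> R'" "\<beta> \<in> R'" for \<alpha> \<beta>
    using dq_comm[OF nz[OF that(2)] nz[OF that(1)] _ f] orth[OF that(2) that(1)] by (cases "\<alpha> = \<beta>") auto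
  define E where "E = (\<lambda>\<xi> \<eta> x. dir_deriv \<xi> (dir_deriv \<eta> f) x
      + (\<Sum>\<alpha>\<in>R'. \<kappa> \<alpha> * (complex_of_real (\<alpha> \<bullet> \<eta>) * dir_deriv \<xi> (diff_quot \<alpha> f) x + complex_of_real (\<alpha> \<bullet> \<xi>) * diff_quot \<alpha> (dir_deriv \<eta> f) x))
      + (\<Sum>\<beta>\<in>R'. \<Sum>\<alpha>\<in>R'. (\<kappa> \<beta> * complex_of_real (\<beta> \<bullet> \<xi>)) * (\<kappa> \<alpha> * complex_of_real (\<alpha> \<bullet> \<eta>)) * diff_quot \<beta> (diff_quot \<alpha> f) x))"
  have TT: "dunkl_T \<kappa> R' \<xi> (dunkl_T \<kappa> R' \<eta> f) x = E \<xi> \<eta> x" for \<xi> \<eta> x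
  proof -
    have ddT: "dir_deriv \<xi> (dunkl_T \<kappa> R' \<eta> f) = (\<lambda>x. dir_deriv \<xi> (dir_deriv \<eta> f) x + (\<Sum>\<alpha>\<in>R'. (\<kappa> \<alpha> * complex_of_real (\<alpha> \<bullet> \<eta>)) * dir_deriv \<xi> (diff_quot \<alpha> f) x))"
      unfolding T_eq by (rule shape_dd[OF dd_poly[OF f] fin dqP[OF _ f]])
    have dqT: "diff_quot \<beta> (dunkl_T \<kappa> R' \<eta> f) = (\<lambda>x. diff_quot \<beta> (dir_deriv \<eta> f) x + (\<Sum>\<alpha>\<in>R'. (\<kappa> \<alpha> * complex_of_real (\<alpha> \<bullet> \<eta>)) * diff_quot \<beta> (diff_quot \<alpha> f) x))"
      if "\<beta> \<in> R'" for \<beta>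
      unfolding T_eq by (rule shape_dq[OF nz[OF that] dd_poly[OF f] fin dqP[OF _ f]])
    have "dunkl_T \<kappa> R' \<xi> (dunkl_T \<kappa> R' \<eta> f) x = dir_deriv \<xi> (dunkl_T \<kappa> R' \<eta> f) x + (\<Sum>\<beta>\<in>R'. (\<kappa> \<beta> * complex_of_real (\<beta> \<bullet> \<xi>)) * diff_quot \<beta> (dunkl_T \<kappa> R' \<eta> f) x)"
      by (simp add: T_eq[of _ _ \<xi>])
    also have "\<dots> = dir_deriv \<xi> (dir_deriv \<eta> f) x + (\<Sum>\<alpha>\<in>R'. (\<kappa> \<alpha> * complex_of_real (\<alpha> \<bullet> \<eta>)) * dir_deriv \<xi> (diff_quot \<alpha> f) x)
       + (\<Sum>\<beta>\<in>R'. (\<kappa> \<beta> * complex_of_real (\<beta> \<bullet> \<xi>)) * (diff_quot \<beta> (dir_deriv \<eta> f) x + (\<Sum>\<alpha>\<in>R'. (\<kappa> \<alpha> * complex_of_real (\<alpha> \<bullet> \<eta>)) * diff_quot \<beta> (diff_quot \<alpha> f) x)))"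
      using dqT by (simp add: ddT)
    also have "\<dots> = E \<xi> \<eta> x"
      unfolding E_def by (rule alg[OF fin])
    finally show ?thesis .
  qed
  have "E \<xi> \<eta> x = E \<eta> \<xi> x" for x
  proof -
    have 1: "dir_deriv \<xi> (dir_deriv \<eta> f) x = dir_deriv \<eta> (dir_deriv \<xi> f) x" by (simp add: dd_comm[OF f])
    have 2: "(\<Sum>\<alpha>\<in>R'. \<kappa> \<alpha> * (complex_of_real (\<alpha> \<bullet> \<eta>) * dir_deriv \<xi> (diff_quot \<alpha> f) x + complex_of_real (\<alpha> \<bullet> \<xi>) * diff_quot \<alpha> (dir_deriv \<eta> f) x))
       = (\<Sum>\<alpha>\<in>R'. \<kappa> \<alpha> * (complex_of_real (\<alpha> \<bullet> \<xi>) * dir_deriv \<eta> (diff_quot \<alpha> f) x + complex_of_real (\<alpha> \<bullet> \<eta>) * diff_quot \<alpha> (dir_deriv \<xi> f) x))"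
      by (rule sum.cong[OF refl]) (simp add: cross[OF nz f])
    have 3: "(\<Sum>\<beta>\<in>R'. \<Sum>\<alpha>\<in>R'. (\<kappa> \<beta> * complex_of_real (\<beta> \<bullet> \<xi>)) * (\<kappa> \<alpha> * complex_of_real (\<alpha> \<bullet> \<eta>)) * diff_quot \<beta> (diff_quot \<alpha> f) x)
       = (\<Sum>\<beta>\<in>R'. \<Sum>\<alpha>\<in>R'. (\<kappa> \<beta> * complex_of_real (\<beta> \<bullet> \<eta>)) * (\<kappa> \<alpha> * complex_of_real (\<alpha> \<bullet> \<xi>)) * diff_quot \<beta> (diff_quot \<alpha> f) x)"
      apply (subst (2) sum.swap)
      apply (rule sum.cong[OF refl])
      apply (rule sum.cong[OF refl])
      apply (simp add: dqc)
      done
    show ?thesis unfolding E_def using 1 2 3 by simp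
  qed
  then show ?thesis using TT by auto
qed

end
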